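(* Let $\mathbb{F}$ be a field, $d\geq1$ and $V$ a vector space over $\mathbb{F}$ of dimension $d+1$. Let $E^*_0,\dots,E^*_d$ be a system of mutually orthogonal idempotents in $\mathrm{End}(V)$ and $A\in\mathrm{End}(V)$ with $E^*_iAE^*_j=0$ if $|i-j|>1$ and $E^*_iAE^*_j\neq0$ if $|i-j|=1$. Assume $A$ is multiplicity-free and bipartite, with primitive idempotents $E_0,\dots,E_d$ and corresponding eigenvalues $\theta_0,\dots,\theta_d$. Let $\theta^*_0,\dots,\theta^*_d\in\mathbb{F}$ and $A^*=\sum_i\theta^*_iE^*_i$. If $(A;\{E_i\}_{i=0}^d;A^*;\{E^*_i\}_{i=0}^d)$ is a Leonard system, then for $0\le i\le d$, $\theta_i=0$ if and only if $d$ is even and $i=d/2$.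
   Context: A system of mutually orthogonal idempotents: $E^*_iE^*_j=\delta_{ij}E^*_i$, $\operatorname{rank}E^*_i=1$. $A$ multiplicity-free: $d+1$ distinct eigenvalues in $\mathbb{F}$; $E_i$ is the projection onto the $\theta_i$-eigenspace along the other eigenspaces. Bipartite: $\operatorname{tr}(E^*_iA)=0$ for all $i$. A Leonard system on $V$ is a sequence $(A;\{E_i\};A^*;\{E^*_i\})$ such that $A$ and $A^*$ are multiplicity-free, $E_0,\dots,E_d$ is an ordering of the primitive idempotents of $A$, $E^*_0,\dots,E^*_d$ is an ordering of the primitive idempotents of $A^*$, $E^*_iAE^*_j$ is $0$ if $|i-j|>1$ and nonzero if $|i-j|=1$, and $E_iA^*E_j$ is $0$ if $|i-j|>1$ and nonzero if $|i-j|=1$. *)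

theory Defs
  imports "Jordan_Normal_Form.DL_Rank" "Jordan_Normal_Form.Char_Poly"
begin

text \<open>End(V) for dim V = d+1 is represented by (d+1) x (d+1) matrices over the field.\<close>

definition mat_trace :: "'a::comm_ring_1 mat \<Rightarrow> 'a" where
  "mat_trace M = (\<Sum>i<dim_row M. M $$ (i, i))"

definition orth_idempotent_system :: "nat \<Rightarrow> (nat \<Rightarrow> 'a::field mat) \<Rightarrow> bool" where
  "orth_idempotent_system d Es \<longleftrightarrow>
     (\<forall>i\<le>d. Es i \<in> carrier_mat (d+1) (d+1) \<and> vec_space.rank (d+1) (Es i) = 1) \<and>
     (\<forall>i\<le>d. \<forall>j\<le>d. Es i * Es j = (if i = j then Es i else 0\<^sub>m (d+1) (d+1)))"

text \<open>A is multiplicity-free with eigenvalues th 0, ..., th d (distinct) and E i is the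
  projection onto the th i-eigenspace along the other eigenspaces.\<close>
definition mult_free_with :: "nat \<Rightarrow> 'a::field mat \<Rightarrow> (nat \<Rightarrow> 'a) \<Rightarrow> (nat \<Rightarrow> 'a mat) \<Rightarrow> bool" where
  "mult_free_with d A th E \<longleftrightarrow>
     A \<in> carrier_mat (d+1) (d+1) \<and>
     inj_on th {0..d} \<and> (\<forall>i\<le>d. eigenvalue A (th i)) \<and>
     (\<forall>i\<le>d. E i \<in> carrier_mat (d+1) (d+1) \<and>
        (\<forall>j\<le>d. \<forall>v\<in>carrier_vec (d+1). A *\<^sub>v v = th j \<cdot>\<^sub>v v \<longrightarrow>
            E i *\<^sub>v v = (if i = j then v else 0\<^sub>v (d+1))))"

definition prim_idempotents :: "nat \<Rightarrow> 'a::field mat \<Rightarrow> (nat \<Rightarrow> 'a mat) \<Rightarrow> bool" where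
  "prim_idempotents d A E \<longleftrightarrow> (\<exists>th. mult_free_with d A th E)"

definition bipartite :: "nat \<Rightarrow> 'a::field mat \<Rightarrow> (nat \<Rightarrow> 'a mat) \<Rightarrow> bool" where
  "bipartite d A Es \<longleftrightarrow> (\<forall>i\<le>d. mat_trace (Es i * A) = 0)"

definition tridiag_wrt :: "nat \<Rightarrow> 'a::field mat \<Rightarrow> (nat \<Rightarrow> 'a mat) \<Rightarrow> bool" where
  "tridiag_wrt d A Es \<longleftrightarrow>
     (\<forall>i\<le>d. \<forall>j\<le>d.
        (1 < \<bar>int i - int j\<bar> \<longrightarrow> Es i * A * Es j = 0\<^sub>m (d+1) (d+1)) \<and>
        (\<bar>int i - int j\<bar> = 1 \<longrightarrow> Es i * A * Es j \<noteq> 0\<^sub>m (d+1) (d+1)))"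

definition leonard_system ::
  "nat \<Rightarrow> 'a::field mat \<Rightarrow> (nat \<Rightarrow> 'a mat) \<Rightarrow> 'a mat \<Rightarrow> (nat \<Rightarrow> 'a mat) \<Rightarrow> bool" where
  "leonard_system d A E As Es \<longleftrightarrow>
     prim_idempotents d A E \<and> prim_idempotents d As Es \<and>
     tridiag_wrt d A Es \<and> tridiag_wrt d As E"

definition lin_comb_mat :: "nat \<Rightarrow> (nat \<Rightarrow> 'a::field) \<Rightarrow> (nat \<Rightarrow> 'a mat) \<Rightarrow> 'a mat" where
  "lin_comb_mat d c M = mat (d+1) (d+1) (\<lambda>(r, s). \<Sum>i\<le>d. c i * M i $$ (r, s))"

end

theory Submission
  imports Defs
begin


lemma (in vec_space) rank1_decomp:
  assumes E: "E \<in> carrier_mat n nc" and r: "rank E = 1"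
  shows "\<exists>u g. u \<in> carrier_vec n \<and> (\<forall>r<n. \<forall>c<nc. E $$ (r,c) = u $ r * g c)"
proof -
  have li0: "lin_indpt {}"
    by (metis (no_types) empty_subsetI fin_dim finite_basis_exists subset_li_is_li vec_vs vectorspace.basis_def)
  obtain S where S: "finite S" "maximal S (\<lambda>T. T \<subseteq> set (cols E) \<and> lin_indpt T)"
    using maximal_exists_superset[of "set (cols E)" "(\<lambda>T. T \<subseteq> set (cols E) \<and> lin_indpt T)" "{}"] li0
    by auto
  have "card S = 1" using rank_card_indpt[OF E S(2)] r by simp
  then obtain u where Su: "S = {u}" using card_1_singletonE by blast
  have ucols: "u \<in> set (cols E)" and li: "lin_indpt {u}" using S(2) Su unfolding maximal_def by auto
  have colsc: "set (cols E) \<subseteq> carrier_vec n" using E cols_dim by blast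
  have uc: "u \<in> carrier_vec n" using ucols colsc by auto
  have inspan: "w \<in> span {u}" if w: "w \<in> set (cols E)" for w
  proof (cases "w = u")
    case True then show ?thesis using span_self uc by auto
  next
    case False
    have "\<not> lin_indpt ({u} \<union> {w})"
    proof
      assume "lin_indpt ({u} \<union> {w})"
      then have "{u} \<union> {w} = S" using S(2) Su w ucols unfolding maximal_def by auto
      then show False using False Su by auto
    qed
    then show ?thesis using lin_dep_iff_in_span[of "{u}" w] li uc w colsc False by auto
  qed
  have "\<exists>a. \<forall>r<n. col E c $ r = a * u $ r" if c: "c < nc" for c
  proof -
    have "col E c \<in> set (cols E)" using c E by (simp add: cols_def)
    then have "col E c \<in> span {u}" by (rule inspan)
    then obtain a where "lincomb a {u} = col E c" using finite_in_span[of "{u}" "col E c"] uc by auto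
    moreover have "lincomb a {u} $ r = a u * u $ r" if "r < n" for r
      using lincomb_index[of r "{u}" a] uc that by simp
    ultimately show ?thesis by metis
  qed
  then obtain g where g: "\<forall>c<nc. \<forall>r<n. col E c $ r = g c * u $ r" by metis
  show ?thesis
    apply (rule exI[of _ u], rule exI[of _ g])
    using g uc E by (auto simp: mult.commute)
qed


lemma mult_entry:
  assumes "X \<in> carrier_mat n m" "Y \<in> carrier_mat m p" "i < n" "j < p"
  shows "(X * Y) $$ (i,j) = (\<Sum>k<m. X $$ (i,k) * Y $$ (k,j))"
  using assms by (simp add: scalar_prod_def atLeast0LessThan)

lemma mult_vec_entry:
  assumes "X \<in> carrier_mat n m" "v \<in> carrier_vec m" "i < n"
  shows "(X *\<^sub>v v) $ i = (\<Sum>k<m. X $$ (i,k) * v $ k)"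
  using assms by (simp add: scalar_prod_def atLeast0LessThan)

lemma rank1_trace:
  fixes M :: "'a::field mat"
  assumes M: "M \<in> carrier_mat n n" and X: "X \<in> carrier_mat n n"
    and Xe: "\<forall>r<n. \<forall>c<n. X $$ (r,c) = u $ r * g c"
  shows "X * M * X = mat_trace (X * M) \<cdot>\<^sub>m X"
proof (rule eq_matI)
  fix r c assume r: "r < dim_row (mat_trace (X * M) \<cdot>\<^sub>m X)" and c: "c < dim_col (mat_trace (X * M) \<cdot>\<^sub>m X)"
  then have r: "r < n" and c: "c < n" using X by auto
  have "(X * M * X) $$ (r,c) = (\<Sum>q<n. (\<Sum>p<n. X $$ (r,p) * M $$ (p,q)) * X $$ (q,c))"
    using mult_entry[of "X*M" n n X n r c] mult_entry[of X n n M n] X M r c by simp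
  also have "\<dots> = (\<Sum>q<n. (\<Sum>p<n. u $ r * g c * (g p * M $$ (p,q) * u $ q)))"
    using r c Xe by (intro sum.cong refl) (simp add: sum_distrib_right sum_distrib_left mult.commute mult.left_commute)
  also have "\<dots> = u $ r * g c * (\<Sum>q<n. (\<Sum>p<n. g p * M $$ (p,q) * u $ q))"
    by (simp add: sum_distrib_left)
  finally have 1: "(X * M * X) $$ (r,c) = u $ r * g c * (\<Sum>q<n. (\<Sum>p<n. g p * M $$ (p,q) * u $ q))" .
  have "mat_trace (X * M) = (\<Sum>i<n. (\<Sum>p<n. X $$ (i,p) * M $$ (p,i)))"
    unfolding mat_trace_def using mult_entry[of X n n M n] X M by simp
  also have "\<dots> = (\<Sum>q<n. (\<Sum>p<n. g p * M $$ (p,q) * u $ q))"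
    using Xe by (intro sum.cong refl) (simp add: mult.commute mult.left_commute)
  finally show "(X * M * X) $$ (r,c) = (mat_trace (X * M) \<cdot>\<^sub>m X) $$ (r,c)"
    using 1 r c X Xe by (simp add: mult.commute mult.left_commute)
qed (use X M in auto)



locale LS =
  fixes d :: nat and A :: "'a::field mat" and E Es :: "nat \<Rightarrow> 'a mat"
    and th ths :: "nat \<Rightarrow> 'a"
  assumes d1: "d \<ge> 1"
    and orth: "orth_idempotent_system d Es"
    and tri: "tridiag_wrt d A Es"
    and mf: "mult_free_with d A th E"
    and bip: "bipartite d A Es"
    and leo: "leonard_system d A E (lin_comb_mat d ths Es) Es"
begin

lemma Es_car: "k \<le> d \<Longrightarrow> Es k \<in> carrier_mat (d+1) (d+1)"
  using orth unfolding orth_idempotent_system_def by auto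

lemma Es_rank: "k \<le> d \<Longrightarrow> vec_space.rank (d+1) (Es k) = 1"
  using orth unfolding orth_idempotent_system_def by auto

lemma Es_mult: "k \<le> d \<Longrightarrow> l \<le> d \<Longrightarrow> Es k * Es l = (if k = l then Es k else 0\<^sub>m (d+1) (d+1))"
  using orth unfolding orth_idempotent_system_def by auto

lemma A_car: "A \<in> carrier_mat (d+1) (d+1)"
  using mf unfolding mult_free_with_def by auto

lemma Es_nz: "k \<le> d \<Longrightarrow> \<exists>r c. r < d+1 \<and> c < d+1 \<and> Es k $$ (r,c) \<noteq> 0"
proof (rule ccontr)
  assume k: "k \<le> d" and "\<not> (\<exists>r c. r < d+1 \<and> c < d+1 \<and> Es k $$ (r,c) \<noteq> 0)"
  then have "Es k = 0\<^sub>m (d+1) (d+1)" using Es_car[OF k] by (intro eq_matI) auto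
  moreover have "vec_space.rank (d+1) (0\<^sub>m (d+1) (d+1) :: 'a mat) = 0" by (rule vec_space.rank_0I)
  ultimately show False using Es_rank[OF k] by simp
qed

lemma decomp: "\<exists>u g. \<forall>k\<le>d. u k \<in> carrier_vec (d+1) \<and>
   (\<forall>r<d+1. \<forall>c<d+1. Es k $$ (r,c) = u k $ r * g k c)"
proof -
  have "\<forall>k. \<exists>p. k \<le> d \<longrightarrow> fst p \<in> carrier_vec (d+1) \<and> (\<forall>r<d+1. \<forall>c<d+1. Es k $$ (r,c) = fst p $ r * snd p c)"
    using vec_space.rank1_decomp[OF Es_car Es_rank] by fastforce
  then obtain p where "\<forall>k. k \<le> d \<longrightarrow> fst (p k) \<in> carrier_vec (d+1) \<and> (\<forall>r<d+1. \<forall>c<d+1. Es k $$ (r,c) = fst (p k) $ r * snd (p k) c)"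
    by metis
  then show ?thesis by (intro exI[of _ "\<lambda>k. fst (p k)"] exI[of _ "\<lambda>k. snd (p k)"]) auto
qed

lemma Es_A_Es: "k \<le> d \<Longrightarrow> Es k * A * Es k = 0\<^sub>m (d+1) (d+1)"
proof -
  assume k: "k \<le> d"
  obtain u g where ug: "\<forall>k\<le>d. u k \<in> carrier_vec (d+1) \<and>
   (\<forall>r<d+1. \<forall>c<d+1. Es k $$ (r,c) = u k $ r * g k c)" using decomp by blast
  have "Es k * A * Es k = mat_trace (Es k * A) \<cdot>\<^sub>m Es k"
    by (rule rank1_trace[OF A_car Es_car[OF k]]) (use ug k in auto)
  also have "mat_trace (Es k * A) = 0" using bip k unfolding bipartite_def by auto
  finally show ?thesis using Es_car[OF k] by auto
qed

lemma sum_Es: "lin_comb_mat d (\<lambda>_. 1) Es = 1\<^sub>m (d+1)"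
proof -
  obtain u g where ug: "\<forall>k\<le>d. u k \<in> carrier_vec (d+1) \<and>
   (\<forall>r<d+1. \<forall>c<d+1. Es k $$ (r,c) = u k $ r * g k c)" using decomp by blast
  define kap where "kap k l = (\<Sum>m<d+1. g k m * u l $ m)" for k l
  have prod: "(Es k * Es l) $$ (r,c) = u k $ r * kap k l * g l c"
    if "k \<le> d" "l \<le> d" "r < d+1" "c < d+1" for k l r c
  proof -
    have "(Es k * Es l) $$ (r,c) = (\<Sum>m<d+1. Es k $$ (r,m) * Es l $$ (m,c))"
      using mult_entry[OF Es_car Es_car] that by blast
    also have "\<dots> = (\<Sum>m<d+1. u k $ r * (g k m * u l $ m) * g l c)"
      using ug that by (intro sum.cong refl) (simp add: mult.commute mult.left_commute)
    also have "\<dots> = u k $ r * kap k l * g l c"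
      unfolding kap_def sum_distrib_left sum_distrib_right by (rule sum.cong) (simp_all add: mult.assoc)
    finally show ?thesis .
  qed
  have kap: "kap k l = (if k = l then 1 else 0)" if kl: "k \<le> d" "l \<le> d" for k l
  proof -
    obtain r1 c1 where rc1: "r1 < d+1" "c1 < d+1" "Es k $$ (r1,c1) \<noteq> 0" using Es_nz kl by blast
    obtain r2 c2 where rc2: "r2 < d+1" "c2 < d+1" "Es l $$ (r2,c2) \<noteq> 0" using Es_nz kl by blast
    have e1: "Es k $$ (r1,c1) = u k $ r1 * g k c1" using ug kl rc1 by blast
    have e2: "Es l $$ (r2,c2) = u l $ r2 * g l c2" using ug kl rc2 by blast
    have ur: "u k $ r1 \<noteq> 0" and gc1: "g k c1 \<noteq> 0" using rc1(3) unfolding e1 by auto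
    have gc: "g l c2 \<noteq> 0" using rc2(3) unfolding e2 by auto
    show ?thesis
    proof (cases "k = l")
      case True
      have "(Es k * Es l) $$ (r1,c1) = Es k $$ (r1,c1)" using Es_mult[OF kl] True by presburger
      then have "u k $ r1 * kap k l * g l c1 = u k $ r1 * 1 * g k c1"
        unfolding prod[OF kl rc1(1,2)] e1 by simp
      then show ?thesis using True ur gc1 by simp
    next
      case False
      have "(Es k * Es l) $$ (r1,c2) = 0" using Es_mult[OF kl] False rc1 rc2 by simp
      then have "u k $ r1 * kap k l * g l c2 = 0"
        unfolding prod[OF kl rc1(1) rc2(2)] .
      then show ?thesis using False ur gc by simp
    qed
  qed
  define G where "G = mat (d+1) (d+1) (\<lambda>(k,m). g k m)"
  define U where "U = mat (d+1) (d+1) (\<lambda>(m,l). u l $ m)"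
  have GU: "G * U = 1\<^sub>m (d+1)"
  proof (rule eq_matI)
    fix k l assume "k < dim_row (1\<^sub>m (d+1))" "l < dim_col (1\<^sub>m (d+1))"
    then have kl: "k \<le> d" "l \<le> d" by auto
    have "(G * U) $$ (k,l) = kap k l"
      unfolding kap_def using mult_entry[of G "d+1" "d+1" U "d+1" k l] kl unfolding G_def U_def by simp
    then show "(G * U) $$ (k,l) = 1\<^sub>m (d+1) $$ (k,l)" using kap[OF kl] kl by simp
  qed (auto simp: G_def U_def)
  have UG: "U * G = 1\<^sub>m (d+1)"
    by (rule mat_mult_left_right_inverse[OF _ _ GU]) (auto simp: G_def U_def)
  show ?thesis
  proof (rule eq_matI)
    fix r c assume "r < dim_row (1\<^sub>m (d+1))" "c < dim_col (1\<^sub>m (d+1))"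
    then have rc: "r < d+1" "c < d+1" by auto
    have "lin_comb_mat d (\<lambda>_. 1) Es $$ (r,c) = (\<Sum>k\<le>d. Es k $$ (r,c))"
      unfolding lin_comb_mat_def using rc by simp
    also have "\<dots> = (\<Sum>k<d+1. u k $ r * g k c)" using ug rc
      by (simp add: lessThan_Suc_atMost)
    also have "\<dots> = (U * G) $$ (r,c)"
      using mult_entry[of U "d+1" "d+1" G "d+1" r c] rc unfolding G_def U_def by simp
    finally show "lin_comb_mat d (\<lambda>_. 1) Es $$ (r,c) = 1\<^sub>m (d+1) $$ (r,c)" using UG by simp
  qed (auto simp: lin_comb_mat_def)
qed

end


lemma swap4: "(\<Sum>q\<in>Q. \<Sum>p\<in>P. \<Sum>k\<in>K. \<Sum>l\<in>L. f q p k l) = (\<Sum>k\<in>K. \<Sum>l\<in>L. \<Sum>q\<in>Q. \<Sum>p\<in>P. f q p k l)"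
proof -
  have "(\<Sum>q\<in>Q. \<Sum>p\<in>P. \<Sum>k\<in>K. \<Sum>l\<in>L. f q p k l) = (\<Sum>q\<in>Q. \<Sum>k\<in>K. \<Sum>p\<in>P. \<Sum>l\<in>L. f q p k l)"
    by (rule sum.cong[OF refl], rule sum.swap)
  also have "\<dots> = (\<Sum>k\<in>K. \<Sum>q\<in>Q. \<Sum>p\<in>P. \<Sum>l\<in>L. f q p k l)" by (rule sum.swap)
  also have "\<dots> = (\<Sum>k\<in>K. \<Sum>q\<in>Q. \<Sum>l\<in>L. \<Sum>p\<in>P. f q p k l)"
    by (rule sum.cong[OF refl], rule sum.cong[OF refl], rule sum.swap)
  also have "\<dots> = (\<Sum>k\<in>K. \<Sum>l\<in>L. \<Sum>q\<in>Q. \<Sum>p\<in>P. f q p k l)"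
    by (rule sum.cong[OF refl], rule sum.swap)
  finally show ?thesis .
qed

lemma prod3: "(\<Sum>k\<in>K. x k) * (m::'a::comm_ring_1) * (\<Sum>l\<in>L. y l) = (\<Sum>k\<in>K. \<Sum>l\<in>L. x k * m * y l)"
  unfolding sum_distrib_right sum_distrib_left by (rule sum.swap)

context LS begin

lemma lc_entry: "r < d+1 \<Longrightarrow> c < d+1 \<Longrightarrow> lin_comb_mat d a Es $$ (r,c) = (\<Sum>k\<le>d. a k * Es k $$ (r,c))"
  unfolding lin_comb_mat_def by simp

lemma lc_car[simp]: "lin_comb_mat d a Es \<in> carrier_mat (d+1) (d+1)"
  unfolding lin_comb_mat_def by simp

lemma lc_car2[simp]: "lin_comb_mat d a Es \<in> carrier_mat (Suc d) (Suc d)"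
  unfolding lin_comb_mat_def by simp

lemma L1:
  assumes M: "M \<in> carrier_mat (d+1) (d+1)" and rs: "r < d+1" "s < d+1"
  shows "(lin_comb_mat d a Es * M * lin_comb_mat d b Es) $$ (r,s)
     = (\<Sum>k\<le>d. \<Sum>l\<le>d. a k * b l * (Es k * M * Es l) $$ (r,s))"
proof -
  let ?X = "lin_comb_mat d a Es" and ?Y = "lin_comb_mat d b Es"
  have "(?X * M * ?Y) $$ (r,s) = (\<Sum>q<d+1. (\<Sum>p<d+1. ?X $$ (r,p) * M $$ (p,q)) * ?Y $$ (q,s))"
  proof -
    have h1: "(?X * M * ?Y) $$ (r,s) = (\<Sum>q<d+1. (?X * M) $$ (r,q) * ?Y $$ (q,s))"
      by (rule mult_entry[OF mult_carrier_mat[OF lc_car M] lc_car rs])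
    have h2: "(?X * M) $$ (r,q) = (\<Sum>p<d+1. ?X $$ (r,p) * M $$ (p,q))" if "q \<in> {..<d+1}" for q
      by (rule mult_entry) (use M rs that in auto)
    show ?thesis unfolding h1 using h2 by (intro sum.cong refl) simp
  qed
  also have "\<dots> = (\<Sum>q<d+1. \<Sum>p<d+1. \<Sum>k\<le>d. \<Sum>l\<le>d. a k * b l * (Es k $$ (r,p) * M $$ (p,q) * Es l $$ (q,s)))"
  proof (rule sum.cong[OF refl])
    fix q assume q: "q \<in> {..<d+1}"
    have "(\<Sum>p<d+1. ?X $$ (r,p) * M $$ (p,q)) * ?Y $$ (q,s)
       = (\<Sum>p<d+1. (\<Sum>k\<le>d. a k * Es k $$ (r,p)) * M $$ (p,q)) * (\<Sum>l\<le>d. b l * Es l $$ (q,s))"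
      using q rs by (simp add: lc_entry)
    also have "\<dots> = (\<Sum>p<d+1. \<Sum>k\<le>d. \<Sum>l\<le>d. a k * b l * (Es k $$ (r,p) * M $$ (p,q) * Es l $$ (q,s)))"
      unfolding sum_distrib_right[of _ "{..<d+1}"] by (intro sum.cong refl, simp only: prod3, intro sum.cong refl, simp add: ac_simps)
    finally show "(\<Sum>p<d+1. ?X $$ (r,p) * M $$ (p,q)) * ?Y $$ (q,s) = (\<Sum>p<d+1. \<Sum>k\<le>d. \<Sum>l\<le>d. a k * b l * (Es k $$ (r,p) * M $$ (p,q) * Es l $$ (q,s)))" .
  qed
  also have "\<dots> = (\<Sum>k\<le>d. \<Sum>l\<le>d. \<Sum>q<d+1. \<Sum>p<d+1. a k * b l * (Es k $$ (r,p) * M $$ (p,q) * Es l $$ (q,s)))"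
    by (rule swap4)
  also have "\<dots> = (\<Sum>k\<le>d. \<Sum>l\<le>d. a k * b l * (Es k * M * Es l) $$ (r,s))"
  proof (intro sum.cong refl)
    fix k l assume k: "k \<in> {..d}" and l: "l \<in> {..d}"
    have "(Es k * M * Es l) $$ (r,s) = (\<Sum>q<d+1. (\<Sum>p<d+1. Es k $$ (r,p) * M $$ (p,q)) * Es l $$ (q,s))"
    proof -
      have h1: "(Es k * M * Es l) $$ (r,s) = (\<Sum>q<d+1. (Es k * M) $$ (r,q) * Es l $$ (q,s))"
        using k l by (intro mult_entry[OF mult_carrier_mat[OF Es_car M] Es_car rs]) auto
      have h2: "(Es k * M) $$ (r,q) = (\<Sum>p<d+1. Es k $$ (r,p) * M $$ (p,q))" if "q \<in> {..<d+1}" for q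
        by (rule mult_entry) (use M rs that Es_car k in auto)
      show ?thesis unfolding h1 using h2 by (intro sum.cong refl) simp
    qed
    then show "(\<Sum>q<d+1. \<Sum>p<d+1. a k * b l * (Es k $$ (r,p) * M $$ (p,q) * Es l $$ (q,s))) = a k * b l * (Es k * M * Es l) $$ (r,s)"
      by (simp only: sum_distrib_left sum_distrib_right)
  qed
  finally show ?thesis .
qed

end


context LS begin

lemma EAE_adj: "k \<le> d \<Longrightarrow> l \<le> d \<Longrightarrow> Es k * A * Es l \<noteq> 0\<^sub>m (d+1) (d+1) \<Longrightarrow> \<bar>int k - int l\<bar> = 1"
proof -
  assume kl: "k \<le> d" "l \<le> d" and nz: "Es k * A * Es l \<noteq> 0\<^sub>m (d+1) (d+1)"
  have "k \<noteq> l" using Es_A_Es[OF kl(1)] nz by auto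
  moreover have "\<not> 1 < \<bar>int k - int l\<bar>" using tri kl nz unfolding tridiag_wrt_def by auto
  ultimately show ?thesis by linarith
qed

lemma one_sum: "(\<Sum>l\<le>d. (if l = k then f l else 0)) = (if k \<le> d then f k else (0::'a))"
  by (simp add: sum.delta')

lemma L2: "lin_comb_mat d a Es * lin_comb_mat d b Es = lin_comb_mat d (\<lambda>k. a k * b k) Es"
proof (rule eq_matI)
  fix r s assume "r < dim_row (lin_comb_mat d (\<lambda>k. a k * b k) Es)" "s < dim_col (lin_comb_mat d (\<lambda>k. a k * b k) Es)"
  then have rs: "r < d+1" "s < d+1" unfolding lin_comb_mat_def by auto
  have "lin_comb_mat d a Es * lin_comb_mat d b Es = lin_comb_mat d a Es * 1\<^sub>m (d+1) * lin_comb_mat d b Es"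
    using lc_car[of a] by (simp only: right_mult_one_mat)
  then have "(lin_comb_mat d a Es * lin_comb_mat d b Es) $$ (r,s) = (\<Sum>k\<le>d. \<Sum>l\<le>d. a k * b l * (Es k * 1\<^sub>m (d+1) * Es l) $$ (r,s))"
    using L1[OF one_carrier_mat rs] by simp
  also have "\<dots> = (\<Sum>k\<le>d. \<Sum>l\<le>d. (if l = k then a k * b k * Es k $$ (r,s) else 0))"
  proof (intro sum.cong refl)
    fix k l assume "k \<in> {..d}" "l \<in> {..d}"
    then have kl: "k \<le> d" "l \<le> d" by auto
    have "Es k * 1\<^sub>m (d+1) * Es l = Es k * Es l" using Es_car[OF kl(1)] by simp
    then show "a k * b l * (Es k * 1\<^sub>m (d+1) * Es l) $$ (r,s) = (if l = k then a k * b k * Es k $$ (r,s) else 0)"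
      using Es_mult[OF kl] rs by auto
  qed
  also have "\<dots> = (\<Sum>k\<le>d. a k * b k * Es k $$ (r,s))"
    by (intro sum.cong refl) (simp only: one_sum, simp)
  also have "\<dots> = lin_comb_mat d (\<lambda>k. a k * b k) Es $$ (r,s)" using lc_entry rs by simp
  finally show "(lin_comb_mat d a Es * lin_comb_mat d b Es) $$ (r,s) = lin_comb_mat d (\<lambda>k. a k * b k) Es $$ (r,s)" .
qed (auto simp: lin_comb_mat_def)

definition "D = lin_comb_mat d (\<lambda>k. (-1)^k) Es"
abbreviation "As \<equiv> lin_comb_mat d ths Es"

lemma D_car[simp]: "D \<in> carrier_mat (d+1) (d+1)" unfolding D_def by simp

lemma DD: "D * D = 1\<^sub>m (d+1)"
  unfolding D_def L2 sum_Es[symmetric] by (simp add: power_mult_distrib[symmetric])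

lemma DAs: "D * As = As * D"
  unfolding D_def L2 by (simp add: mult.commute)

lemma DAsD: "D * As * D = As"
proof -
  have "D * As * D = As * D * D" using DAs by simp
  also have "\<dots> = As * (D * D)" using D_car lc_car by (meson assoc_mult_mat)
  also have "\<dots> = As" unfolding DD using lc_car[of ths] by (simp only: right_mult_one_mat)
  finally show ?thesis .
qed

lemma DAD: "D * A * D = (-1) \<cdot>\<^sub>m A"
proof (rule eq_matI)
  fix r s assume "r < dim_row ((-1) \<cdot>\<^sub>m A)" "s < dim_col ((-1) \<cdot>\<^sub>m A)"
  then have rs: "r < d+1" "s < d+1" using A_car by auto
  have eqA: "lin_comb_mat d (\<lambda>_. 1) Es * A * lin_comb_mat d (\<lambda>_. 1) Es = A"
    unfolding sum_Es using A_car by simp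
  have Ae: "A $$ (r,s) = (\<Sum>k\<le>d. \<Sum>l\<le>d. 1 * 1 * (Es k * A * Es l) $$ (r,s))"
    using L1[OF A_car rs, of "\<lambda>_. 1" "\<lambda>_. 1"] unfolding eqA .
  have "(D * A * D) $$ (r,s) = (\<Sum>k\<le>d. \<Sum>l\<le>d. (-1)^k * (-1)^l * (Es k * A * Es l) $$ (r,s))"
    unfolding D_def by (rule L1[OF A_car rs])
  also have "\<dots> = (\<Sum>k\<le>d. \<Sum>l\<le>d. - (1 * 1 * (Es k * A * Es l) $$ (r,s)))"
  proof (intro sum.cong refl)
    fix k l assume "k \<in> {..d}" "l \<in> {..d}"
    then have kl: "k \<le> d" "l \<le> d" by auto
    show "(-1)^k * (-1)^l * (Es k * A * Es l) $$ (r,s) = - (1 * 1 * (Es k * A * Es l) $$ (r,s))"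
    proof (cases "Es k * A * Es l = 0\<^sub>m (d+1) (d+1)")
      case True then show ?thesis using rs by simp
    next
      case False
      then have "\<bar>int k - int l\<bar> = 1" using EAE_adj kl by blast
      then have "odd (k + l)" by presburger
      then have "(-1::'a)^k * (-1)^l = -1" by (simp add: power_add[symmetric])
      then show ?thesis by simp
    qed
  qed
  also have "\<dots> = - A $$ (r,s)" unfolding Ae by (simp add: sum_negf)
  finally show "(D * A * D) $$ (r,s) = ((-1) \<cdot>\<^sub>m A) $$ (r,s)" using rs A_car by simp
qed (use A_car D_car in auto)

definition "P = lin_comb_mat d (\<lambda>k. if even k then 1 else 0) Es"
definition "Q = lin_comb_mat d (\<lambda>k. if even k then 0 else 1) Es"

lemma P_car[simp]: "P \<in> carrier_mat (d+1) (d+1)" unfolding P_def by simp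
lemma Q_car[simp]: "Q \<in> carrier_mat (d+1) (d+1)" unfolding Q_def by simp

lemma QP: "Q * P = 0\<^sub>m (d+1) (d+1)"
proof -
  have "Q * P = lin_comb_mat d (\<lambda>_. 0) Es" unfolding P_def Q_def L2 by (intro arg_cong[where f="\<lambda>f. lin_comb_mat d f Es"]) auto
  then show ?thesis unfolding lin_comb_mat_def by auto
qed

lemma PQ1: "P + Q = 1\<^sub>m (d+1)"
proof (rule eq_matI)
  fix r s assume "r < dim_row (1\<^sub>m (d+1))" "s < dim_col (1\<^sub>m (d+1))"
  then have rs: "r < d+1" "s < d+1" by auto
  have "(P + Q) $$ (r,s) = (\<Sum>k\<le>d. (if even k then 1 else 0) * Es k $$ (r,s) + (if even k then 0 else 1) * Es k $$ (r,s))"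
  proof -
    have "(P + Q) $$ (r,s) = P $$ (r,s) + Q $$ (r,s)" using rs P_car Q_car by (metis carrier_matD index_add_mat(1))
    then show ?thesis unfolding P_def Q_def by (simp only: lc_entry[OF rs] sum.distrib)
  qed
  also have "\<dots> = lin_comb_mat d (\<lambda>_. 1) Es $$ (r,s)" by (simp only: lc_entry[OF rs]) (intro sum.cong refl, simp)
  finally show "(P + Q) $$ (r,s) = 1\<^sub>m (d+1) $$ (r,s)" unfolding sum_Es .
qed (use Q_car in auto)

lemma PAP: "P * A * P = 0\<^sub>m (d+1) (d+1)"
proof (rule eq_matI)
  fix r s assume "r < dim_row (0\<^sub>m (d+1) (d+1) :: 'a mat)" "s < dim_col (0\<^sub>m (d+1) (d+1) :: 'a mat)"
  then have rs: "r < d+1" "s < d+1" by auto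
  have "(P * A * P) $$ (r,s) = (\<Sum>k\<le>d. \<Sum>l\<le>d. (if even k then 1 else 0) * (if even l then 1 else 0) * (Es k * A * Es l) $$ (r,s))"
    unfolding P_def by (rule L1[OF A_car rs])
  also have "\<dots> = (\<Sum>k\<le>d. \<Sum>l\<le>d. (0::'a))"
  proof (intro sum.cong refl)
    fix k l assume "k \<in> {..d}" "l \<in> {..d}"
    then have kl: "k \<le> d" "l \<le> d" by auto
    show "(if even k then 1 else 0) * (if even l then 1 else 0) * (Es k * A * Es l) $$ (r,s) = (0::'a)"
    proof (cases "Es k * A * Es l = 0\<^sub>m (d+1) (d+1)")
      case True then show ?thesis using rs by simp
    next
      case False
      then have "\<bar>int k - int l\<bar> = 1" using EAE_adj kl by blast
      then have "odd (k + l)" by presburger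
      then show ?thesis by auto
    qed
  qed
  finally show "(P * A * P) $$ (r,s) = 0\<^sub>m (d+1) (d+1) $$ (r,s)" using rs by simp
qed (use A_car P_car in auto)

lemma QAQ: "Q * A * Q = 0\<^sub>m (d+1) (d+1)"
proof (rule eq_matI)
  fix r s assume "r < dim_row (0\<^sub>m (d+1) (d+1) :: 'a mat)" "s < dim_col (0\<^sub>m (d+1) (d+1) :: 'a mat)"
  then have rs: "r < d+1" "s < d+1" by auto
  have "(Q * A * Q) $$ (r,s) = (\<Sum>k\<le>d. \<Sum>l\<le>d. (if even k then 0 else 1) * (if even l then 0 else 1) * (Es k * A * Es l) $$ (r,s))"
    unfolding Q_def by (rule L1[OF A_car rs])
  also have "\<dots> = (\<Sum>k\<le>d. \<Sum>l\<le>d. (0::'a))"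
  proof (intro sum.cong refl)
    fix k l assume "k \<in> {..d}" "l \<in> {..d}"
    then have kl: "k \<le> d" "l \<le> d" by auto
    show "(if even k then 0 else 1) * (if even l then 0 else 1) * (Es k * A * Es l) $$ (r,s) = (0::'a)"
    proof (cases "Es k * A * Es l = 0\<^sub>m (d+1) (d+1)")
      case True then show ?thesis using rs by simp
    next
      case False
      then have "\<bar>int k - int l\<bar> = 1" using EAE_adj kl by blast
      then have "odd (k + l)" by presburger
      then show ?thesis by auto
    qed
  qed
  finally show "(Q * A * Q) $$ (r,s) = 0\<^sub>m (d+1) (d+1) $$ (r,s)" using rs by simp
qed (use A_car Q_car in auto)

end


context LS begin

lemma th_inj: "inj_on th {0..d}" using mf unfolding mult_free_with_def by auto
lemma E_car: "k \<le> d \<Longrightarrow> E k \<in> carrier_mat (d+1) (d+1)" using mf unfolding mult_free_with_def by auto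
lemma E_act: "k \<le> d \<Longrightarrow> j \<le> d \<Longrightarrow> v \<in> carrier_vec (d+1) \<Longrightarrow> A *\<^sub>v v = th j \<cdot>\<^sub>v v \<Longrightarrow>
   E k *\<^sub>v v = (if k = j then v else 0\<^sub>v (d+1))"
  using mf unfolding mult_free_with_def by auto

definition "w j = (SOME v. eigenvector A v (th j))"

lemma w_eig: "j \<le> d \<Longrightarrow> w j \<in> carrier_vec (d+1) \<and> w j \<noteq> 0\<^sub>v (d+1) \<and> A *\<^sub>v w j = th j \<cdot>\<^sub>v w j"
proof -
  assume j: "j \<le> d"
  have "eigenvalue A (th j)" using mf j unfolding mult_free_with_def by auto
  then have "eigenvector A (w j) (th j)" unfolding eigenvalue_def w_def by (rule someI_ex)
  then show ?thesis using A_car unfolding eigenvector_def by auto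
qed

definition "W = mat (d+1) (d+1) (\<lambda>(r,c). w c $ r)"

lemma W_car[simp]: "W \<in> carrier_mat (d+1) (d+1)" unfolding W_def by simp

lemma W_dims[simp]: "dim_row W = Suc d" "dim_col W = Suc d" unfolding W_def by auto
lemma W_car2[simp]: "W \<in> carrier_mat (Suc d) (Suc d)" using W_car by simp
lemma A_car2[simp]: "A \<in> carrier_mat (Suc d) (Suc d)" using A_car by simp
lemma D_car2[simp]: "D \<in> carrier_mat (Suc d) (Suc d)" using D_car by simp
lemma P_car2[simp]: "P \<in> carrier_mat (Suc d) (Suc d)" using P_car by simp
lemma Q_car2[simp]: "Q \<in> carrier_mat (Suc d) (Suc d)" using Q_car by simp
lemma E_car2: "k \<le> d \<Longrightarrow> E k \<in> carrier_mat (Suc d) (Suc d)" using E_car by simp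

lemma mat_vec_zero: "X \<in> carrier_mat m n \<Longrightarrow> X *\<^sub>v 0\<^sub>v n = (0\<^sub>v m :: 'a vec)"
  by (intro eq_vecI) (auto simp: scalar_prod_def)

lemma smult_zero_imp: "(a::'a) \<cdot>\<^sub>v v = 0\<^sub>v m \<Longrightarrow> v \<noteq> 0\<^sub>v m \<Longrightarrow> v \<in> carrier_vec m \<Longrightarrow> a = 0"
proof (rule ccontr)
  assume h: "a \<cdot>\<^sub>v v = 0\<^sub>v m" "v \<noteq> 0\<^sub>v m" "v \<in> carrier_vec m" "a \<noteq> 0"
  then obtain i where i: "i < m" "v $ i \<noteq> 0" by (metis carrier_vecD eq_vecI index_zero_vec(1,2))
  have e1: "(a \<cdot>\<^sub>v v) $ i = a * v $ i" using i h(3) by simp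
  have e2: "(a \<cdot>\<^sub>v v) $ i = 0" using h(1) i by simp
  from e1 e2 have "a * v $ i = 0" by simp
  then show False using h(4) i(2) by simp
qed

lemma col_W: "j \<le> d \<Longrightarrow> col W j = w j"
  using w_eig[of j] unfolding W_def by (intro eq_vecI) auto

lemma EW_entry: "k \<le> d \<Longrightarrow> r \<le> d \<Longrightarrow> j \<le> d \<Longrightarrow> (E k * W) $$ (r,j) = (if k = j then w j $ r else 0)"
proof -
  assume k: "k \<le> d" and r: "r \<le> d" and j: "j \<le> d"
  have "(E k * W) $$ (r,j) = col (E k * W) j $ r" by (subst index_col) (use E_car2[OF k] r j in auto)
  also have "\<dots> = (E k *\<^sub>v w j) $ r" using col_mult2[OF E_car[OF k] W_car, of j] j col_W by simp
  also have "\<dots> = (if k = j then w j $ r else 0)" using E_act[OF k j] w_eig[OF j] r by simp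
  finally show ?thesis .
qed

lemma E_Wc: "k \<le> d \<Longrightarrow> c \<in> carrier_vec (d+1) \<Longrightarrow> E k *\<^sub>v (W *\<^sub>v c) = (c $ k) \<cdot>\<^sub>v w k"
proof -
  assume k: "k \<le> d" and c: "c \<in> carrier_vec (d+1)"
  have wc: "w k \<in> carrier_vec (d+1)" using w_eig[OF k] by blast
  have ek: "E k * W \<in> carrier_mat (d+1) (d+1)" using E_car[OF k] W_car by (rule mult_carrier_mat)
  have 1: "E k *\<^sub>v (W *\<^sub>v c) = (E k * W) *\<^sub>v c"
    by (rule assoc_mult_mat_vec[symmetric, OF E_car[OF k] W_car c])
  have 2: "((E k * W) *\<^sub>v c) $ r = ((c $ k) \<cdot>\<^sub>v w k) $ r" if r: "r < d+1" for r
  proof -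
    have "((E k * W) *\<^sub>v c) $ r = (\<Sum>j<d+1. (E k * W) $$ (r,j) * c $ j)"
      by (rule mult_vec_entry[OF ek c r])
    also have "\<dots> = (\<Sum>j<d+1. (if j = k then w k $ r * c $ k else 0))"
    proof (rule sum.cong[OF refl])
      fix j assume "j \<in> {..<d+1}"
      then have j: "j \<le> d" by simp
      show "(E k * W) $$ (r,j) * c $ j = (if j = k then w k $ r * c $ k else 0)"
      proof -
        have "(E k * W) $$ (r,j) = (if k = j then w j $ r else 0)" using EW_entry[OF k _ j] r by simp
        then show ?thesis by auto
      qed
    qed
    also have "\<dots> = w k $ r * c $ k"
      by (subst sum.delta) (use k in auto)
    also have "\<dots> = ((c $ k) \<cdot>\<^sub>v w k) $ r"
      using index_smult_vec(1)[of r "w k" "c $ k"] carrier_vecD[OF wc] r by (simp add: mult.commute)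
    finally show ?thesis .
  qed
  have 3: "(E k * W) *\<^sub>v c = (c $ k) \<cdot>\<^sub>v w k"
    by (rule eq_vecI) (use 2 carrier_matD(1)[OF ek] carrier_vecD[OF wc] in auto)
  show ?thesis using 1 3 by simp
qed

lemma W_inj0: "c \<in> carrier_vec (d+1) \<Longrightarrow> W *\<^sub>v c = 0\<^sub>v (d+1) \<Longrightarrow> c = 0\<^sub>v (d+1)"
proof (rule eq_vecI)
  fix k assume c: "c \<in> carrier_vec (d+1)" and z: "W *\<^sub>v c = 0\<^sub>v (d+1)" and "k < dim_vec (0\<^sub>v (d+1) :: 'a vec)"
  then have k: "k \<le> d" by simp
  have "(c $ k) \<cdot>\<^sub>v w k = E k *\<^sub>v 0\<^sub>v (d+1)" using E_Wc[OF k c] z by simp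
  also have "\<dots> = 0\<^sub>v (d+1)" using E_car[OF k] by (rule mat_vec_zero)
  finally have "(c $ k) \<cdot>\<^sub>v w k = 0\<^sub>v (d+1)" .
  moreover have "w k \<noteq> 0\<^sub>v (d+1)" and "w k \<in> carrier_vec (d+1)" using w_eig[OF k] by auto
  ultimately have "c $ k = 0"
    by (rule smult_zero_imp)
  then show "c $ k = 0\<^sub>v (d+1) $ k" using k by simp
qed simp

end


lemma smult_mat_vec: "X \<in> carrier_mat m n \<Longrightarrow> v \<in> carrier_vec n \<Longrightarrow> (a \<cdot>\<^sub>m X) *\<^sub>v v = (a::'a::comm_ring_1) \<cdot>\<^sub>v (X *\<^sub>v v)"
  by (intro eq_vecI) (auto simp: scalar_prod_def sum_distrib_left ac_simps)

context LS begin

lemma W_det: "det W \<noteq> 0"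
proof
  assume "det W = 0"
  then obtain v where v: "v \<in> carrier_vec (d+1)" "v \<noteq> 0\<^sub>v (d+1)" "W *\<^sub>v v = 0\<^sub>v (d+1)"
    using det_0_iff_vec_prod_zero_field[OF W_car] by blast
  then show False using W_inj0 by blast
qed

lemma W_inv_ex: "\<exists>Wi. Wi \<in> carrier_mat (d+1) (d+1) \<and> Wi * W = 1\<^sub>m (d+1) \<and> W * Wi = 1\<^sub>m (d+1)"
proof -
  have "W \<in> Units (ring_mat TYPE('a) (d+1) undefined)" by (rule det_non_zero_imp_unit[OF W_car W_det])
  then show ?thesis unfolding Units_def ring_mat_simps by auto
qed

definition "Wi = (SOME Wi. Wi \<in> carrier_mat (d+1) (d+1) \<and> Wi * W = 1\<^sub>m (d+1) \<and> W * Wi = 1\<^sub>m (d+1))"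

lemma Wi: "Wi \<in> carrier_mat (d+1) (d+1)" "Wi * W = 1\<^sub>m (d+1)" "W * Wi = 1\<^sub>m (d+1)"
  using someI_ex[OF W_inv_ex] unfolding Wi_def by auto

lemma W_coef: "x \<in> carrier_vec (d+1) \<Longrightarrow> W *\<^sub>v (Wi *\<^sub>v x) = x"
  using assoc_mult_mat_vec[OF W_car Wi(1), of x, symmetric] Wi(3) by simp

lemma Wi_W: "c \<in> carrier_vec (d+1) \<Longrightarrow> Wi *\<^sub>v (W *\<^sub>v c) = c"
  using assoc_mult_mat_vec[OF Wi(1) W_car, of c, symmetric] Wi(2) by simp

lemma AW_entry: "r \<le> d \<Longrightarrow> j \<le> d \<Longrightarrow> (A * W) $$ (r,j) = th j * w j $ r"
proof -
  assume r: "r \<le> d" and j: "j \<le> d"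
  have wc: "w j \<in> carrier_vec (d+1)" using w_eig[OF j] by blast
  have "(A * W) $$ (r,j) = col (A * W) j $ r" by (subst index_col) (use r j carrier_matD(1)[OF A_car] in auto)
  also have "\<dots> = (A *\<^sub>v w j) $ r" using col_mult2[OF A_car W_car, of j] j col_W by simp
  also have "\<dots> = (th j \<cdot>\<^sub>v w j) $ r" using w_eig[OF j] by simp
  also have "\<dots> = th j * w j $ r" using index_smult_vec(1)[of r "w j" "th j"] carrier_vecD[OF wc] r by simp
  finally show ?thesis .
qed

lemma W_entry: "r \<le> d \<Longrightarrow> j \<le> d \<Longrightarrow> W $$ (r,j) = w j $ r"
  unfolding W_def by simp

lemma A_Wc: "c \<in> carrier_vec (d+1) \<Longrightarrow> A *\<^sub>v (W *\<^sub>v c) = W *\<^sub>v vec (d+1) (\<lambda>j. th j * c $ j)"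
proof -
  assume c: "c \<in> carrier_vec (d+1)"
  have aw: "A * W \<in> carrier_mat (d+1) (d+1)" using A_car W_car by (rule mult_carrier_mat)
  have 1: "A *\<^sub>v (W *\<^sub>v c) = (A * W) *\<^sub>v c"
    by (rule assoc_mult_mat_vec[symmetric, OF A_car W_car c])
  have tc: "vec (d+1) (\<lambda>j. th j * c $ j) \<in> carrier_vec (d+1)" by simp
  have 2: "((A * W) *\<^sub>v c) $ r = (W *\<^sub>v vec (d+1) (\<lambda>j. th j * c $ j)) $ r" if r: "r < d+1" for r
  proof -
    have "((A * W) *\<^sub>v c) $ r = (\<Sum>j<d+1. (A * W) $$ (r,j) * c $ j)"
      by (rule mult_vec_entry[OF aw c r])
    also have "\<dots> = (\<Sum>j<d+1. W $$ (r,j) * vec (d+1) (\<lambda>j. th j * c $ j) $ j)"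
    proof (rule sum.cong[OF refl])
      fix j assume "j \<in> {..<d+1}"
      then have j: "j \<le> d" "j < d+1" by auto
      have "(A * W) $$ (r,j) = th j * w j $ r" using AW_entry[OF _ j(1)] r by simp
      moreover have "W $$ (r,j) = w j $ r" using W_entry[OF _ j(1)] r by simp
      moreover have "vec (d+1) (\<lambda>j. th j * c $ j) $ j = th j * c $ j" using j(2) by (rule index_vec)
      ultimately show "(A * W) $$ (r,j) * c $ j = W $$ (r,j) * vec (d+1) (\<lambda>j. th j * c $ j) $ j"
        by (simp add: ac_simps)
    qed
    also have "\<dots> = (W *\<^sub>v vec (d+1) (\<lambda>j. th j * c $ j)) $ r"
      by (rule mult_vec_entry[OF W_car tc r, symmetric])
    finally show ?thesis .
  qed
  have 3: "(A * W) *\<^sub>v c = W *\<^sub>v vec (d+1) (\<lambda>j. th j * c $ j)"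
    by (rule eq_vecI) (use 2 carrier_matD(1)[OF aw] carrier_matD(1)[OF W_car] in auto)
  show ?thesis using 1 3 by simp
qed

lemma eig_complete:
  assumes x: "x \<in> carrier_vec (d+1)" "x \<noteq> 0\<^sub>v (d+1)" "A *\<^sub>v x = \<mu> \<cdot>\<^sub>v x"
  shows "\<exists>k\<le>d. th k = \<mu>"
proof -
  define c where "c = Wi *\<^sub>v x"
  have c: "c \<in> carrier_vec (d+1)" unfolding c_def using Wi(1) x(1) by simp
  have xc: "x = W *\<^sub>v c" unfolding c_def using W_coef[OF x(1)] by simp
  define t where "t = vec (d+1) (\<lambda>j. th j * c $ j)"
  have tc: "t \<in> carrier_vec (d+1)" unfolding t_def by simp
  have "W *\<^sub>v t = W *\<^sub>v (\<mu> \<cdot>\<^sub>v c)"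
  proof -
    have "W *\<^sub>v t = A *\<^sub>v x" unfolding t_def xc using A_Wc[OF c] by simp
    also have "\<dots> = \<mu> \<cdot>\<^sub>v (W *\<^sub>v c)" using x(3) xc by simp
    also have "\<dots> = W *\<^sub>v (\<mu> \<cdot>\<^sub>v c)" using mult_mat_vec[OF W_car c] by simp
    finally show ?thesis .
  qed
  then have "Wi *\<^sub>v (W *\<^sub>v t) = Wi *\<^sub>v (W *\<^sub>v (\<mu> \<cdot>\<^sub>v c))" by simp
  then have tmu: "t = \<mu> \<cdot>\<^sub>v c" using Wi_W[OF tc] Wi_W[of "\<mu> \<cdot>\<^sub>v c"] c by simp
  have "c \<noteq> 0\<^sub>v (d+1)"
  proof
    assume "c = 0\<^sub>v (d+1)"
    then have "x = 0\<^sub>v (d+1)" using xc mat_vec_zero[OF W_car] by simp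
    then show False using x(2) by simp
  qed
  then obtain k where k: "k < d+1" "c $ k \<noteq> 0" using c by (metis carrier_vecD eq_vecI index_zero_vec(1,2))
  have "t $ k = th k * c $ k" unfolding t_def using k(1) by simp
  moreover have "t $ k = \<mu> * c $ k" using tmu k(1) c by simp
  ultimately have "th k = \<mu>" using k(2) by simp
  then show ?thesis using k(1) less_Suc_eq_le by auto
qed

end


context LS begin

lemma DDX: "X \<in> carrier_mat (d+1) m \<Longrightarrow> D * (D * X) = X"
proof -
  assume X: "X \<in> carrier_mat (d+1) m"
  have "D * (D * X) = (D * D) * X" by (rule assoc_mult_mat[symmetric, OF D_car D_car X])
  also have "\<dots> = X" unfolding DD by (rule left_mult_one_mat[OF X])
  finally show ?thesis .
qed

lemma DDv: "v \<in> carrier_vec (d+1) \<Longrightarrow> D *\<^sub>v (D *\<^sub>v v) = v"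
proof -
  assume v: "v \<in> carrier_vec (d+1)"
  have "D *\<^sub>v (D *\<^sub>v v) = (D * D) *\<^sub>v v" by (rule assoc_mult_mat_vec[symmetric, OF D_car D_car v])
  then show ?thesis unfolding DD using v by simp
qed

lemma AD: "A * D = (-1) \<cdot>\<^sub>m (D * A)"
proof -
  have ad: "A * D \<in> carrier_mat (d+1) (d+1)" using A_car D_car by (rule mult_carrier_mat)
  have "A * D = D * (D * (A * D))" using DDX[OF ad] by simp
  also have "D * (A * D) = D * A * D" by (rule assoc_mult_mat[symmetric, OF D_car A_car D_car])
  also have "\<dots> = (-1) \<cdot>\<^sub>m A" by (rule DAD)
  also have "D * ((-1) \<cdot>\<^sub>m A) = (-1) \<cdot>\<^sub>m (D * A)" by (rule mult_smult_distrib[OF D_car A_car])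
  finally show ?thesis .
qed

lemma AD_vec: "v \<in> carrier_vec (d+1) \<Longrightarrow> A *\<^sub>v (D *\<^sub>v v) = (-1) \<cdot>\<^sub>v (D *\<^sub>v (A *\<^sub>v v))"
proof -
  assume v: "v \<in> carrier_vec (d+1)"
  have da: "D * A \<in> carrier_mat (d+1) (d+1)" using D_car A_car by (rule mult_carrier_mat)
  have "A *\<^sub>v (D *\<^sub>v v) = (A * D) *\<^sub>v v" by (rule assoc_mult_mat_vec[symmetric, OF A_car D_car v])
  also have "\<dots> = (-1) \<cdot>\<^sub>v ((D * A) *\<^sub>v v)" unfolding AD by (rule smult_mat_vec[OF da v])
  also have "(D * A) *\<^sub>v v = D *\<^sub>v (A *\<^sub>v v)" by (rule assoc_mult_mat_vec[OF D_car A_car v])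
  finally show ?thesis .
qed

lemma Dw: "j \<le> d \<Longrightarrow> D *\<^sub>v w j \<in> carrier_vec (d+1) \<and> D *\<^sub>v w j \<noteq> 0\<^sub>v (d+1) \<and>
   A *\<^sub>v (D *\<^sub>v w j) = (- th j) \<cdot>\<^sub>v (D *\<^sub>v w j)"
proof -
  assume j: "j \<le> d"
  have wj: "w j \<in> carrier_vec (d+1)" "w j \<noteq> 0\<^sub>v (d+1)" "A *\<^sub>v w j = th j \<cdot>\<^sub>v w j" using w_eig[OF j] by auto
  have c: "D *\<^sub>v w j \<in> carrier_vec (d+1)" using D_car wj(1) by (rule mult_mat_vec_carrier)
  have nz: "D *\<^sub>v w j \<noteq> 0\<^sub>v (d+1)"
  proof
    assume "D *\<^sub>v w j = 0\<^sub>v (d+1)"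
    then have "D *\<^sub>v (D *\<^sub>v w j) = 0\<^sub>v (d+1)" using mat_vec_zero[OF D_car] by simp
    then show False using DDv[OF wj(1)] wj(2) by simp
  qed
  have "A *\<^sub>v (D *\<^sub>v w j) = (-1) \<cdot>\<^sub>v (D *\<^sub>v (th j \<cdot>\<^sub>v w j))" using AD_vec[OF wj(1)] wj(3) by simp
  also have "D *\<^sub>v (th j \<cdot>\<^sub>v w j) = th j \<cdot>\<^sub>v (D *\<^sub>v w j)" by (rule mult_mat_vec[OF D_car wj(1)])
  also have "(-1) \<cdot>\<^sub>v (th j \<cdot>\<^sub>v (D *\<^sub>v w j)) = (- th j) \<cdot>\<^sub>v (D *\<^sub>v w j)" by (simp add: smult_smult_assoc)
  finally show ?thesis using c nz by simp
qed

definition "sig i = (SOME k. k \<le> d \<and> th k = - th i)"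

lemma sig: "i \<le> d \<Longrightarrow> sig i \<le> d \<and> th (sig i) = - th i"
proof -
  assume i: "i \<le> d"
  have "\<exists>k\<le>d. th k = - th i" using eig_complete Dw[OF i] by blast
  then show ?thesis unfolding sig_def by (rule someI_ex[where P = "\<lambda>k. k \<le> d \<and> th k = - th i", simplified])
qed

lemma sig_inj: "i \<le> d \<Longrightarrow> j \<le> d \<Longrightarrow> sig i = sig j \<Longrightarrow> i = j"
proof -
  assume ij: "i \<le> d" "j \<le> d" "sig i = sig j"
  then have "th i = th j" using sig[OF ij(1)] sig[OF ij(2)] by (metis neg_equal_iff_equal)
  then show "i = j" using th_inj ij unfolding inj_on_def by auto
qed

lemma E_Dw: "k \<le> d \<Longrightarrow> j \<le> d \<Longrightarrow> E k *\<^sub>v (D *\<^sub>v w j) = (if k = sig j then D *\<^sub>v w j else 0\<^sub>v (d+1))"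
proof -
  assume k: "k \<le> d" and j: "j \<le> d"
  have "A *\<^sub>v (D *\<^sub>v w j) = th (sig j) \<cdot>\<^sub>v (D *\<^sub>v w j)" using Dw[OF j] sig[OF j] by simp
  then show ?thesis using E_act[OF k sig[OF j, THEN conjunct1]] Dw[OF j] by blast
qed

lemma DED: "i \<le> d \<Longrightarrow> D * E i * D = E (sig i)"
proof -
  assume i: "i \<le> d"
  define M where "M = D * W"
  define Mi where "Mi = Wi * D"
  have Mc: "M \<in> carrier_mat (d+1) (d+1)" unfolding M_def using D_car W_car by (rule mult_carrier_mat)
  have Mic: "Mi \<in> carrier_mat (d+1) (d+1)" unfolding Mi_def using Wi(1) D_car by (rule mult_carrier_mat)
  have MMi: "M * Mi = 1\<^sub>m (d+1)"
  proof -
    have "M * Mi = D * (W * (Wi * D))" unfolding M_def Mi_def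
      using assoc_mult_mat[OF D_car W_car mult_carrier_mat[OF Wi(1) D_car]] by simp
    also have "W * (Wi * D) = D" using assoc_mult_mat[OF W_car Wi(1) D_car, symmetric] Wi(3) left_mult_one_mat[OF D_car] by simp
    finally show ?thesis using DD by simp
  qed
  have Ei: "E i \<in> carrier_mat (d+1) (d+1)" using E_car[OF i] .
  have X: "D * E i * D \<in> carrier_mat (d+1) (d+1)" using mult_carrier_mat[OF mult_carrier_mat[OF D_car Ei] D_car] .
  have Y: "E (sig i) \<in> carrier_mat (d+1) (d+1)" using E_car sig[OF i] by blast
  have colM: "col M j = D *\<^sub>v w j" if "j \<le> d" for j
    unfolding M_def using col_mult2[OF D_car W_car, of j] that col_W by simp
  have XM: "(D * E i * D) * M = E (sig i) * M"
  proof (rule mat_col_eqI)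
    fix j assume "j < dim_col (E (sig i) * M)"
    then have j: "j \<le> d" using Mc by simp
    have wj: "w j \<in> carrier_vec (d+1)" using w_eig[OF j] by blast
    have "col ((D * E i * D) * M) j = (D * E i * D) *\<^sub>v (D *\<^sub>v w j)"
      using col_mult2[OF X Mc, of j] j colM[OF j] by simp
    also have "\<dots> = D *\<^sub>v (E i *\<^sub>v (D *\<^sub>v (D *\<^sub>v w j)))"
    proof -
      have v: "D *\<^sub>v w j \<in> carrier_vec (d+1)" using D_car wj by (rule mult_mat_vec_carrier)
      have v2: "D *\<^sub>v (D *\<^sub>v w j) \<in> carrier_vec (d+1)" using D_car v by (rule mult_mat_vec_carrier)
      have "(D * E i * D) *\<^sub>v (D *\<^sub>v w j) = (D * E i) *\<^sub>v (D *\<^sub>v (D *\<^sub>v w j))"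
        by (rule assoc_mult_mat_vec[OF mult_carrier_mat[OF D_car Ei] D_car v])
      also have "\<dots> = D *\<^sub>v (E i *\<^sub>v (D *\<^sub>v (D *\<^sub>v w j)))"
        by (rule assoc_mult_mat_vec[OF D_car Ei v2])
      finally show ?thesis .
    qed
    also have "\<dots> = D *\<^sub>v (E i *\<^sub>v w j)" using DDv[OF wj] by simp
    also have "\<dots> = (if i = j then D *\<^sub>v w j else 0\<^sub>v (d+1))" using E_act[OF i j] w_eig[OF j] mat_vec_zero[OF D_car] by auto
    also have "\<dots> = E (sig i) *\<^sub>v (D *\<^sub>v w j)" using E_Dw[OF sig[OF i, THEN conjunct1] j] sig_inj[OF i j] by auto
    also have "\<dots> = col (E (sig i) * M) j" using col_mult2[OF Y Mc, of j] j colM[OF j] by simp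
    finally show "col ((D * E i * D) * M) j = col (E (sig i) * M) j" .
  qed (use X Y Mc in auto)
  have "D * E i * D = (D * E i * D) * (M * Mi)" unfolding MMi using right_mult_one_mat[OF X] by simp
  also have "\<dots> = ((D * E i * D) * M) * Mi" using assoc_mult_mat[OF X Mc Mic] by simp
  also have "\<dots> = (E (sig i) * M) * Mi" unfolding XM ..
  also have "\<dots> = E (sig i) * (M * Mi)" using assoc_mult_mat[OF Y Mc Mic] by simp
  also have "\<dots> = E (sig i)" unfolding MMi using right_mult_one_mat[OF Y] by simp
  finally show ?thesis .
qed

end


lemma path_fix0:
  assumes inj: "inj_on f {..d}" and rng: "\<forall>i\<le>d. f i \<le> d"
    and adj: "\<forall>i\<le>d. \<forall>j\<le>d. i \<noteq> j \<longrightarrow> (\<bar>int (f i) - int (f j)\<bar> = 1 \<longleftrightarrow> \<bar>int i - int j\<bar> = 1)"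
    and f0: "f 0 = 0"
  shows "\<forall>i\<le>d. f i = i"
proof -
  have "\<forall>i\<le>k. i \<le> d \<longrightarrow> f i = i" for k
  proof (induction k)
    case 0 then show ?case using f0 by auto
  next
    case (Suc k)
    show ?case
    proof (intro allI impI)
      fix i assume i: "i \<le> Suc k" "i \<le> d"
      show "f i = i"
      proof (cases "i \<le> k")
        case True then show ?thesis using Suc i by auto
      next
        case False
        then have ik: "i = Suc k" using i by simp
        have kd: "k \<le> d" "Suc k \<le> d" using i ik by auto
        have fk: "f k = k" using Suc kd by auto
        have "\<bar>int (f (Suc k)) - int (f k)\<bar> = 1" using adj[rule_format, OF kd(2) kd(1)] by simp
        then have c: "f (Suc k) = Suc k \<or> (k \<ge> 1 \<and> f (Suc k) = k - 1)" using fk by auto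
        show ?thesis
        proof (cases "f (Suc k) = Suc k")
          case True then show ?thesis using ik by simp
        next
          case False
          then have k1: "k \<ge> 1" and fs: "f (Suc k) = k - 1" using c by auto
          have "f (k - 1) = k - 1" using Suc kd by auto
          then have "f (Suc k) = f (k - 1)" using fs by simp
          then have "Suc k = k - 1" using inj kd unfolding inj_on_def by (meson atMost_iff diff_le_self le_trans)
          then show ?thesis by simp
        qed
      qed
    qed
  qed
  then show ?thesis by blast
qed

lemma path_auto:
  assumes d1: "d \<ge> 1" and inj: "inj_on f {..d}" and rng: "\<forall>i\<le>d. f i \<le> d"
    and adj: "\<forall>i\<le>d. \<forall>j\<le>d. i \<noteq> j \<longrightarrow> (\<bar>int (f i) - int (f j)\<bar> = 1 \<longleftrightarrow> \<bar>int i - int j\<bar> = 1)"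
  shows "(\<forall>i\<le>d. f i = i) \<or> (\<forall>i\<le>d. f i = d - i)"
proof -
  have "f ` {..d} \<subseteq> {..d}" using rng by auto
  then have surj: "f ` {..d} = {..d}" using endo_inj_surj[of "{..d}" f] inj by blast
  have f0: "f 0 = 0 \<or> f 0 = d"
  proof (rule ccontr)
    assume "\<not> (f 0 = 0 \<or> f 0 = d)"
    then have m: "0 < f 0" "f 0 < d" using rng by (auto simp: le_less)
    have "f 0 - 1 \<in> f ` {..d}" unfolding surj using m by simp
    then obtain a where a: "a \<le> d" "f a = f 0 - 1" by auto
    have "f 0 + 1 \<in> f ` {..d}" unfolding surj using m by simp
    then obtain b where b: "b \<le> d" "f b = f 0 + 1" by auto
    have "a \<noteq> 0"
    proof
      assume "a = 0" then have "f 0 = f 0 - 1" using a by simp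
      then show False using m by simp
    qed
    moreover have "\<bar>int (f a) - int (f 0)\<bar> = 1" using a m by simp
    ultimately have "\<bar>int a - int 0\<bar> = 1" using adj[rule_format, OF a(1), of 0] by simp
    then have a1: "a = 1" by simp
    have "b \<noteq> 0"
    proof
      assume "b = 0" then have "f 0 = f 0 + 1" using b by simp
      then show False by simp
    qed
    moreover have "\<bar>int (f b) - int (f 0)\<bar> = 1" using b by simp
    ultimately have "\<bar>int b - int 0\<bar> = 1" using adj[rule_format, OF b(1), of 0] by simp
    then have b1: "b = 1" by simp
    show False using a b a1 b1 m by simp
  qed
  show ?thesis
  proof (cases "f 0 = 0")
    case True then show ?thesis using path_fix0[OF inj rng adj] by blast
  next
    case False
    then have fd: "f 0 = d" using f0 by simp
    define g where "g i = d - f i" for i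
    have ginj: "inj_on g {..d}"
    proof (rule inj_onI)
      fix x y assume xy: "x \<in> {..d}" "y \<in> {..d}" "g x = g y"
      then have "f x = f y" unfolding g_def using rng by (metis atMost_iff diff_diff_cancel)
      then show "x = y" using inj xy unfolding inj_on_def by blast
    qed
    have grng: "\<forall>i\<le>d. g i \<le> d" unfolding g_def by simp
    have gadj: "\<forall>i\<le>d. \<forall>j\<le>d. i \<noteq> j \<longrightarrow> (\<bar>int (g i) - int (g j)\<bar> = 1 \<longleftrightarrow> \<bar>int i - int j\<bar> = 1)"
    proof (intro allI impI)
      fix i j assume ij: "i \<le> d" "j \<le> d" "i \<noteq> j"
      have "int (g i) = int d - int (f i)" "int (g j) = int d - int (f j)" unfolding g_def using rng ij by auto
      then have "\<bar>int (g i) - int (g j)\<bar> = \<bar>int (f i) - int (f j)\<bar>" by simp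
      then show "(\<bar>int (g i) - int (g j)\<bar> = 1 \<longleftrightarrow> \<bar>int i - int j\<bar> = 1)" using adj[rule_format, OF ij] by simp
    qed
    have "g 0 = 0" unfolding g_def using fd by simp
    then have g: "\<forall>i\<le>d. g i = i" using path_fix0[OF ginj grng gadj] by blast
    have "\<forall>i\<le>d. f i = d - i"
    proof (intro allI impI)
      fix i assume i: "i \<le> d"
      then have "d - f i = i" using g unfolding g_def by simp
      moreover have "f i \<le> d" using rng i by simp
      ultimately show "f i = d - i" by linarith
    qed
    then show ?thesis by blast
  qed
qed


context LS begin

lemma sqa: "X \<in> carrier_mat (Suc d) (Suc d) \<Longrightarrow> Y \<in> carrier_mat (Suc d) (Suc d) \<Longrightarrow> Z \<in> carrier_mat (Suc d) (Suc d) \<Longrightarrow> X * Y * Z = X * (Y * Z)"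
  by (rule assoc_mult_mat)
lemma sqc: "X \<in> carrier_mat (Suc d) (Suc d) \<Longrightarrow> Y \<in> carrier_mat (Suc d) (Suc d) \<Longrightarrow> X * Y \<in> carrier_mat (Suc d) (Suc d)"
  by (rule mult_carrier_mat)

lemma DAsDX: "X \<in> carrier_mat (d+1) m \<Longrightarrow> D * (As * (D * X)) = As * X"
proof -
  assume X: "X \<in> carrier_mat (d+1) m"
  have "D * (As * (D * X)) = D * ((As * D) * X)" using assoc_mult_mat[OF lc_car D_car X] by simp
  also have "\<dots> = (D * (As * D)) * X" using assoc_mult_mat[OF D_car mult_carrier_mat[OF lc_car D_car] X] by simp
  also have "D * (As * D) = D * As * D" using assoc_mult_mat[OF D_car lc_car D_car] by simp
  finally show ?thesis using DAsD by simp
qed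

lemma Zsig: "i \<le> d \<Longrightarrow> j \<le> d \<Longrightarrow> E (sig i) * As * E (sig j) = D * (E i * As * E j) * D"
proof -
  assume i: "i \<le> d" and j: "j \<le> d"
  have Ei: "E i \<in> carrier_mat (Suc d) (Suc d)" and Ej: "E j \<in> carrier_mat (Suc d) (Suc d)" using E_car i j by auto
  have ejd: "E j * D \<in> carrier_mat (d+1) (d+1)" using sqc[OF Ej D_car2] by simp
  have "E (sig i) * As * E (sig j) = (D * E i * D) * As * (D * E j * D)" using DED i j by simp
  also have "\<dots> = D * (E i * (D * (As * (D * (E j * D)))))"
    using Ei Ej by (simp only: sqa sqc D_car2 lc_car2)
  also have "D * (As * (D * (E j * D))) = As * (E j * D)" using DAsDX[OF ejd] .
  also have "D * (E i * (As * (E j * D))) = D * (E i * As * E j) * D"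
    using Ei Ej by (simp only: sqa sqc D_car2 lc_car2)
  finally show ?thesis .
qed

lemma DYD0: "Y \<in> carrier_mat (d+1) (d+1) \<Longrightarrow> D * Y * D = 0\<^sub>m (d+1) (d+1) \<Longrightarrow> Y = 0\<^sub>m (d+1) (d+1)"
proof -
  assume Y: "Y \<in> carrier_mat (d+1) (d+1)" and z: "D * Y * D = 0\<^sub>m (d+1) (d+1)"
  have "Y = D * (D * Y * D) * D"
  proof -
    have Y2: "Y \<in> carrier_mat (Suc d) (Suc d)" using Y by simp
    have "D * (D * Y * D) * D = D * (D * (Y * (D * D)))" using Y2 by (simp only: sqa sqc D_car2)
    also have "\<dots> = Y" unfolding DD using Y DDX[OF Y] by simp
    finally show ?thesis by simp
  qed
  also have "\<dots> = 0\<^sub>m (d+1) (d+1)" unfolding z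
    using left_mult_zero_mat[OF D_car] right_mult_zero_mat[OF D_car] by simp
  finally show ?thesis .
qed

lemma Ztri: "i \<le> d \<Longrightarrow> j \<le> d \<Longrightarrow> i \<noteq> j \<Longrightarrow> (E i * As * E j \<noteq> 0\<^sub>m (d+1) (d+1) \<longleftrightarrow> \<bar>int i - int j\<bar> = 1)"
proof -
  assume ij: "i \<le> d" "j \<le> d" "i \<noteq> j"
  have t: "tridiag_wrt d As E" using leo unfolding leonard_system_def by auto
  have "\<bar>int i - int j\<bar> = 1 \<or> 1 < \<bar>int i - int j\<bar>" using ij(3) by linarith
  then show ?thesis using t ij unfolding tridiag_wrt_def by auto
qed

lemma sig_adj: "i \<le> d \<Longrightarrow> j \<le> d \<Longrightarrow> i \<noteq> j \<Longrightarrow> (\<bar>int (sig i) - int (sig j)\<bar> = 1 \<longleftrightarrow> \<bar>int i - int j\<bar> = 1)"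
proof -
  assume ij: "i \<le> d" "j \<le> d" "i \<noteq> j"
  have si: "sig i \<le> d" "sig j \<le> d" "sig i \<noteq> sig j" using sig ij sig_inj by blast+
  have Zc: "E i * As * E j \<in> carrier_mat (d+1) (d+1)" using E_car ij lc_car[of ths] by (meson mult_carrier_mat)
  have "(\<bar>int (sig i) - int (sig j)\<bar> = 1) \<longleftrightarrow> E (sig i) * As * E (sig j) \<noteq> 0\<^sub>m (d+1) (d+1)"
    using Ztri[OF si] by simp
  also have "\<dots> \<longleftrightarrow> E i * As * E j \<noteq> 0\<^sub>m (d+1) (d+1)"
    unfolding Zsig[OF ij(1,2)] using DYD0[OF Zc] left_mult_zero_mat[OF D_car] right_mult_zero_mat[OF D_car] by auto
  also have "\<dots> \<longleftrightarrow> \<bar>int i - int j\<bar> = 1" using Ztri[OF ij] .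
  finally show ?thesis .
qed

lemma sig_cases: "(\<forall>i\<le>d. sig i = i) \<or> (\<forall>i\<le>d. sig i = d - i)"
proof (rule path_auto[OF d1])
  show "inj_on sig {..d}" using sig_inj unfolding inj_on_def by auto
  show "\<forall>i\<le>d. sig i \<le> d" using sig by auto
  show "\<forall>i\<le>d. \<forall>j\<le>d. i \<noteq> j \<longrightarrow> (\<bar>int (sig i) - int (sig j)\<bar> = 1 \<longleftrightarrow> \<bar>int i - int j\<bar> = 1)"
    using sig_adj by blast
qed

end


lemma zero_mat_vec: "v \<in> carrier_vec n \<Longrightarrow> 0\<^sub>m m n *\<^sub>v v = (0\<^sub>v m :: 'a::comm_ring_1 vec)"
  by (intro eq_vecI) (auto simp: scalar_prod_def)

lemma zero_smult_v: "v \<in> carrier_vec n \<Longrightarrow> (0::'a::comm_ring_1) \<cdot>\<^sub>v v = 0\<^sub>v n"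
  by (intro eq_vecI) auto

context LS begin

lemma split_PQ: "y \<in> carrier_vec (d+1) \<Longrightarrow> P *\<^sub>v y + Q *\<^sub>v y = y"
proof -
  assume y: "y \<in> carrier_vec (d+1)"
  have "P *\<^sub>v y + Q *\<^sub>v y = (P + Q) *\<^sub>v y" by (rule add_mult_distrib_mat_vec[symmetric, OF P_car Q_car y])
  then show ?thesis unfolding PQ1 using y by simp
qed

lemma PAPv: "v \<in> carrier_vec (d+1) \<Longrightarrow> P *\<^sub>v (A *\<^sub>v (P *\<^sub>v v)) = 0\<^sub>v (d+1)"
proof -
  assume v: "v \<in> carrier_vec (d+1)"
  have pv: "P *\<^sub>v v \<in> carrier_vec (d+1)" using P_car v by (rule mult_mat_vec_carrier)
  have "P *\<^sub>v (A *\<^sub>v (P *\<^sub>v v)) = (P * A) *\<^sub>v (P *\<^sub>v v)" by (rule assoc_mult_mat_vec[symmetric, OF P_car A_car pv])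
  also have "\<dots> = (P * A * P) *\<^sub>v v" by (rule assoc_mult_mat_vec[symmetric, OF mult_carrier_mat[OF P_car A_car] P_car v])
  also have "\<dots> = 0\<^sub>v (d+1)" unfolding PAP using zero_mat_vec[OF v] by simp
  finally show ?thesis .
qed

lemma QAQv: "v \<in> carrier_vec (d+1) \<Longrightarrow> Q *\<^sub>v (A *\<^sub>v (Q *\<^sub>v v)) = 0\<^sub>v (d+1)"
proof -
  assume v: "v \<in> carrier_vec (d+1)"
  have pv: "Q *\<^sub>v v \<in> carrier_vec (d+1)" using Q_car v by (rule mult_mat_vec_carrier)
  have "Q *\<^sub>v (A *\<^sub>v (Q *\<^sub>v v)) = (Q * A) *\<^sub>v (Q *\<^sub>v v)" by (rule assoc_mult_mat_vec[symmetric, OF Q_car A_car pv])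
  also have "\<dots> = (Q * A * Q) *\<^sub>v v" by (rule assoc_mult_mat_vec[symmetric, OF mult_carrier_mat[OF Q_car A_car] Q_car v])
  also have "\<dots> = 0\<^sub>v (d+1)" unfolding QAQ using zero_mat_vec[OF v] by simp
  finally show ?thesis .
qed

lemma QPv: "v \<in> carrier_vec (d+1) \<Longrightarrow> Q *\<^sub>v (P *\<^sub>v v) = 0\<^sub>v (d+1)"
proof -
  assume v: "v \<in> carrier_vec (d+1)"
  have "Q *\<^sub>v (P *\<^sub>v v) = (Q * P) *\<^sub>v v" by (rule assoc_mult_mat_vec[symmetric, OF Q_car P_car v])
  then show ?thesis unfolding QP using zero_mat_vec[OF v] by simp
qed

lemma W_single: "j \<le> d \<Longrightarrow> c \<in> carrier_vec (d+1) \<Longrightarrow> (\<forall>k\<le>d. k \<noteq> j \<longrightarrow> c $ k = 0) \<Longrightarrow> W *\<^sub>v c = (c $ j) \<cdot>\<^sub>v w j"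
proof -
  assume j: "j \<le> d" and c: "c \<in> carrier_vec (d+1)" and z: "\<forall>k\<le>d. k \<noteq> j \<longrightarrow> c $ k = 0"
  have wc: "w j \<in> carrier_vec (d+1)" using w_eig[OF j] by blast
  have 2: "(W *\<^sub>v c) $ r = ((c $ j) \<cdot>\<^sub>v w j) $ r" if r: "r < d+1" for r
  proof -
    have "(W *\<^sub>v c) $ r = (\<Sum>k<d+1. W $$ (r,k) * c $ k)" by (rule mult_vec_entry[OF W_car c r])
    also have "\<dots> = (\<Sum>k<d+1. (if k = j then w j $ r * c $ j else 0))"
    proof (rule sum.cong[OF refl])
      fix k assume "k \<in> {..<d+1}"
      then have k: "k \<le> d" by simp
      have "W $$ (r,k) = w k $ r" using W_entry[OF _ k] r by simp
      then show "W $$ (r,k) * c $ k = (if k = j then w j $ r * c $ j else 0)" using z k by auto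
    qed
    also have "\<dots> = w j $ r * c $ j" by (subst sum.delta) (use j in auto)
    also have "\<dots> = ((c $ j) \<cdot>\<^sub>v w j) $ r"
      using index_smult_vec(1)[of r "w j" "c $ j"] carrier_vecD[OF wc] r by (simp add: mult.commute)
    finally show ?thesis .
  qed
  show ?thesis
    by (rule eq_vecI) (use 2 carrier_matD(1)[OF W_car] carrier_vecD[OF wc] in auto)
qed

lemma char2_zero:
  assumes two: "(2::'a) = 0" and j: "j \<le> d"
  shows "th j = 0"
proof -
  define v where "v = w j"
  define t where "t = th j"
  have v: "v \<in> carrier_vec (d+1)" "v \<noteq> 0\<^sub>v (d+1)" "A *\<^sub>v v = t \<cdot>\<^sub>v v" using w_eig[OF j] unfolding v_def t_def by auto
  define x where "x = P *\<^sub>v v"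
  define z where "z = Q *\<^sub>v v"
  have xc: "x \<in> carrier_vec (d+1)" unfolding x_def using P_car v(1) by (rule mult_mat_vec_carrier)
  have zc: "z \<in> carrier_vec (d+1)" unfolding z_def using Q_car v(1) by (rule mult_mat_vec_carrier)
  have vxz: "v = x + z" unfolding x_def z_def using split_PQ[OF v(1)] by simp
  have Axc: "A *\<^sub>v x \<in> carrier_vec (d+1)" using A_car xc by (rule mult_mat_vec_carrier)
  have Azc: "A *\<^sub>v z \<in> carrier_vec (d+1)" using A_car zc by (rule mult_mat_vec_carrier)
  have PAx: "P *\<^sub>v (A *\<^sub>v x) = 0\<^sub>v (d+1)" unfolding x_def using PAPv[OF v(1)] .
  have QAz: "Q *\<^sub>v (A *\<^sub>v z) = 0\<^sub>v (d+1)" unfolding z_def using QAQv[OF v(1)] .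
  have Az: "A *\<^sub>v z = P *\<^sub>v (A *\<^sub>v z)" using split_PQ[OF Azc] QAz Azc
    by (metis right_zero_vec mult_mat_vec_carrier P_car)
  have Ax: "A *\<^sub>v x = Q *\<^sub>v (A *\<^sub>v x)" using split_PQ[OF Axc] PAx Axc
    by (metis left_zero_vec mult_mat_vec_carrier Q_car)
  have tv: "t \<cdot>\<^sub>v v = A *\<^sub>v x + A *\<^sub>v z"
    using v(3) mult_add_distrib_mat_vec[OF A_car xc zc] vxz by simp
  have tx: "t \<cdot>\<^sub>v x = A *\<^sub>v z"
  proof -
    have "t \<cdot>\<^sub>v x = P *\<^sub>v (t \<cdot>\<^sub>v v)" unfolding x_def by (rule mult_mat_vec[OF P_car v(1), symmetric])
    also have "\<dots> = P *\<^sub>v (A *\<^sub>v x + A *\<^sub>v z)" unfolding tv ..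
    also have "\<dots> = P *\<^sub>v (A *\<^sub>v x) + P *\<^sub>v (A *\<^sub>v z)" by (rule mult_add_distrib_mat_vec[OF P_car Axc Azc])
    also have "\<dots> = A *\<^sub>v z" unfolding PAx Az[symmetric] using Azc by simp
    finally show ?thesis .
  qed
  have tz: "t \<cdot>\<^sub>v z = A *\<^sub>v x"
  proof -
    have "t \<cdot>\<^sub>v z = Q *\<^sub>v (t \<cdot>\<^sub>v v)" unfolding z_def by (rule mult_mat_vec[OF Q_car v(1), symmetric])
    also have "\<dots> = Q *\<^sub>v (A *\<^sub>v x + A *\<^sub>v z)" unfolding tv ..
    also have "\<dots> = Q *\<^sub>v (A *\<^sub>v x) + Q *\<^sub>v (A *\<^sub>v z)" by (rule mult_add_distrib_mat_vec[OF Q_car Axc Azc])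
    also have "\<dots> = A *\<^sub>v x" unfolding QAz Ax[symmetric] using Axc by simp
    finally show ?thesis .
  qed
  have AAx: "A *\<^sub>v (A *\<^sub>v x) = (t * t) \<cdot>\<^sub>v x"
  proof -
    have "A *\<^sub>v (A *\<^sub>v x) = A *\<^sub>v (t \<cdot>\<^sub>v z)" unfolding tz ..
    also have "\<dots> = t \<cdot>\<^sub>v (A *\<^sub>v z)" by (rule mult_mat_vec[OF A_car zc])
    also have "\<dots> = t \<cdot>\<^sub>v (t \<cdot>\<^sub>v x)" unfolding tx ..
    also have "\<dots> = (t * t) \<cdot>\<^sub>v x" by (simp add: smult_smult_assoc)
    finally show ?thesis .
  qed
  define c where "c = Wi *\<^sub>v x"
  have cc: "c \<in> carrier_vec (d+1)" unfolding c_def using Wi(1) xc by simp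
  have xW: "x = W *\<^sub>v c" unfolding c_def using W_coef[OF xc] by simp
  define t1 where "t1 = vec (d+1) (\<lambda>k. th k * c $ k)"
  define t2 where "t2 = vec (d+1) (\<lambda>k. th k * t1 $ k)"
  have t1c: "t1 \<in> carrier_vec (d+1)" and t2c: "t2 \<in> carrier_vec (d+1)" unfolding t1_def t2_def by auto
  have "W *\<^sub>v t2 = W *\<^sub>v ((t * t) \<cdot>\<^sub>v c)"
  proof -
    have "W *\<^sub>v t2 = A *\<^sub>v (W *\<^sub>v t1)" unfolding t2_def using A_Wc[OF t1c] by simp
    also have "W *\<^sub>v t1 = A *\<^sub>v x" unfolding t1_def xW using A_Wc[OF cc] by simp
    also have "A *\<^sub>v (A *\<^sub>v x) = (t * t) \<cdot>\<^sub>v (W *\<^sub>v c)" unfolding AAx by (simp only: xW)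
    also have "\<dots> = W *\<^sub>v ((t * t) \<cdot>\<^sub>v c)" using mult_mat_vec[OF W_car cc] by simp
    finally show ?thesis .
  qed
  then have "Wi *\<^sub>v (W *\<^sub>v t2) = Wi *\<^sub>v (W *\<^sub>v ((t * t) \<cdot>\<^sub>v c))" by simp
  then have t2e: "t2 = (t * t) \<cdot>\<^sub>v c" using Wi_W[OF t2c] Wi_W[of "(t * t) \<cdot>\<^sub>v c"] cc by simp
  have ck: "c $ k = 0" if k: "k \<le> d" "k \<noteq> j" for k
  proof (rule ccontr)
    assume nz: "c $ k \<noteq> 0"
    have "t2 $ k = th k * (th k * c $ k)" unfolding t2_def t1_def using k by simp
    moreover have "t2 $ k = t * t * c $ k" using t2e k cc by simp
    ultimately have "th k * th k = t * t" using nz by (simp add: algebra_simps)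
    then have "(th k - t) * (th k - t) = th k * th k + t * t - 2 * th k * t" by (simp add: algebra_simps)
    also have "\<dots> = 0" using \<open>th k * th k = t * t\<close> two by (simp add: algebra_simps)
    finally have "th k = t" by simp
    then have "th k = th j" unfolding t_def .
    then show False using th_inj k j unfolding inj_on_def by auto
  qed
  have xcj: "x = (c $ j) \<cdot>\<^sub>v v" unfolding xW v_def using W_single[OF j cc] ck by auto
  show ?thesis
  proof (cases "c $ j = 0")
    case True
    then have "x = 0\<^sub>v (d+1)" using xcj zero_smult_v[OF v(1)] by simp
    then have "t \<cdot>\<^sub>v z = 0\<^sub>v (d+1)" using tz mat_vec_zero[OF A_car] by simp
    moreover have "z = v" using vxz \<open>x = 0\<^sub>v (d+1)\<close> zc by simp
    ultimately show ?thesis using smult_zero_imp v unfolding t_def by blast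
  next
    case False
    have "Q *\<^sub>v x = 0\<^sub>v (d+1)" unfolding x_def by (rule QPv[OF v(1)])
    moreover have "Q *\<^sub>v x = (c $ j) \<cdot>\<^sub>v z" unfolding xcj z_def by (rule mult_mat_vec[OF Q_car v(1)])
    ultimately have "z = 0\<^sub>v (d+1)" using smult_zero_imp[of "c $ j" z] zc False by metis
    then have "t \<cdot>\<^sub>v x = 0\<^sub>v (d+1)" using tx mat_vec_zero[OF A_car] by simp
    then have "(t * c $ j) \<cdot>\<^sub>v v = 0\<^sub>v (d+1)" unfolding xcj by (simp add: smult_smult_assoc)
    then have "t * c $ j = 0" using smult_zero_imp v by blast
    then show ?thesis using False unfolding t_def by simp
  qed
qed

end


theorem corollary11p3:
  fixes d :: nat and A :: "'a::field mat" and E Es :: "nat \<Rightarrow> 'a mat"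
    and th ths :: "nat \<Rightarrow> 'a"
  assumes "d \<ge> 1"
    and "orth_idempotent_system d Es"
    and "tridiag_wrt d A Es"
    and "mult_free_with d A th E"
    and "bipartite d A Es"
    and "leonard_system d A E (lin_comb_mat d ths Es) Es"
    and "i \<le> d"
  shows "th i = 0 \<longleftrightarrow> (even d \<and> i = d div 2)"
proof -
  interpret LS d A E Es th ths using assms(1-6) by (unfold_locales) auto
  have i: "i \<le> d" by fact
  have th01: "th 0 \<noteq> th 1"
  proof
    assume "th 0 = th 1"
    moreover have "(0::nat) \<in> {0..d}" "(1::nat) \<in> {0..d}" using d1 by auto
    ultimately have "(0::nat) = 1" by (rule inj_onD[OF th_inj])
    then show False by simp
  qed
  have two: "(2::'a) \<noteq> 0"
  proof
    assume h2: "(2::'a) = 0"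
    have "th 0 = 0" by (rule char2_zero[OF h2]) simp
    moreover have "th 1 = 0" by (rule char2_zero[OF h2]) (use d1 in simp)
    ultimately
    show False using th01 by simp
  qed
  have neg0: "x = - x \<Longrightarrow> x = 0" for x :: 'a
  proof -
    assume h: "x = - x"
    have "x + x = x + - x" using h by (rule arg_cong)
    then have "2 * x = 0" by (simp only: mult_2 add.right_inverse)
    then show "x = 0" using two by simp
  qed
  show ?thesis
  proof (cases "\<forall>k\<le>d. sig k = k")
    case True
    have "th (sig 0) = - th 0" "th (sig 1) = - th 1" using sig d1 by auto
    moreover have "sig 0 = 0" "sig 1 = 1" using True d1 by auto
    ultimately have a: "th 0 = - th 0" and b: "th 1 = - th 1" by auto
    have "th 0 = 0" "th 1 = 0" using neg0[OF a] neg0[OF b] by auto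
    then show ?thesis using th01 by simp
  next
    case False
    then have s: "\<forall>k\<le>d. sig k = d - k" using sig_cases by blast
    have rev: "th (d - k) = - th k" if "k \<le> d" for k
    proof -
      have "sig k = d - k" using s that by blast
      then show ?thesis using sig[OF that] by simp
    qed
    show ?thesis
    proof
      assume "th i = 0"
      then have "th (d - i) = th i" using rev[OF i] by simp
      then have "d - i = i" by (rule inj_onD[OF th_inj]) (use i in auto)
      then have "d = 2 * i" using i by simp
      then show "even d \<and> i = d div 2" by simp
    next
      assume "even d \<and> i = d div 2"
      then have "d = 2 * i" by auto
      then have "d - i = i" by simp
      then have "th i = - th i" using rev[OF i] by simp
      then show "th i = 0" by (rule neg0)
    qed
  qed
qed


end
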